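(* Let $\mathcal S$ be a finite generating set of $M_n(\mathbb{C})$, i.e. $\mathcal L(\mathcal S)=M_n(\mathbb{C})$. (1) If $l(\mathcal S)\ge n$ and $\mathcal L_1^0(\mathcal S)$ contains an invertible matrix, then $l_0(\mathcal S)=l(\mathcal S)$. (2) If $l(\mathcal S)=2n-2$ and $\mathcal L_2^0(\mathcal S)$ contains an invertible derogatory matrix, then $l_0(\mathcal S)=l(\mathcal S)$.
   Context: For a finite subset $\mathcal S$ of $M_n(\mathbb{F})$: a word of length $m$ in $\mathcal S$ is a product $S_1S_2\cdots S_m$ with each $S_j\in\mathcal S$; the word of length $0$ is the identity $I_n$. $\mathcal L_k(\mathcal S)$ is the linear span of all words of length at most $k$ (including the identity as the word of length $0$), and $\mathcal L(\mathcal S)=\bigcup_k\mathcal L_k(\mathcal S)$. $\mathcal L_k^0(\mathcal S)$ is the linear span of all words of length between $1$ and $k$ (the identity is not automatically included), and $\mathcal L^0(\mathcal S)=\bigcup_k \mathcal L_k^0(\mathcal S)$. The length $l(\mathcal S)$ is the smallest $k$ with $\mathcal L_k(\mathcal S)=\mathcal L_{k+1}(\mathcal S)$; the length $l_0(\mathcal S)$ is the smallest $k$ with $\mathcal L_k^0(\mathcal S)=\mathcal L_{k+1}^0(\mathcal S)$. A matrix is derogatory if its minimal polynomial has degree less than $n$. *)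

theory Defs
  imports "HOL-Analysis.Analysis" "HOL-Computational_Algebra.Polynomial"
begin

type_synonym ('n) cmat = "complex ^ 'n ^ 'n"

definition mscale :: "complex \<Rightarrow> ('n::finite) cmat \<Rightarrow> ('n::finite) cmat" where
  "mscale c A = (\<chi> i j. c * A $ i $ j)"

definition lin_span :: "('n::finite) cmat set \<Rightarrow> ('n::finite) cmat set" where
  "lin_span W = {A. \<exists>F c. finite F \<and> F \<subseteq> W \<and> A = (\<Sum>w\<in>F. mscale (c w) w)}"

fun words :: "('n::finite) cmat set \<Rightarrow> nat \<Rightarrow> ('n::finite) cmat set" where
  "words S 0 = {mat 1}"
| "words S (Suc m) = {A ** B | A B. A \<in> S \<and> B \<in> words S m}"

definition L :: "('n::finite) cmat set \<Rightarrow> nat \<Rightarrow> ('n::finite) cmat set" where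
  "L S k = lin_span (\<Union>m\<in>{0..k}. words S m)"

definition L0 :: "('n::finite) cmat set \<Rightarrow> nat \<Rightarrow> ('n::finite) cmat set" where
  "L0 S k = lin_span (\<Union>m\<in>{1..k}. words S m)"

definition L_all :: "('n::finite) cmat set \<Rightarrow> ('n::finite) cmat set" where
  "L_all S = (\<Union>k. L S k)"

definition L0_all :: "('n::finite) cmat set \<Rightarrow> ('n::finite) cmat set" where
  "L0_all S = (\<Union>k. L0 S k)"

definition len :: "('n::finite) cmat set \<Rightarrow> nat" where
  "len S = (LEAST k. L S k = L S (Suc k))"

definition len0 :: "('n::finite) cmat set \<Rightarrow> nat" where
  "len0 S = (LEAST k. L0 S k = L0 S (Suc k))"

definition mpow :: "('n::finite) cmat \<Rightarrow> nat \<Rightarrow> ('n::finite) cmat" where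
  "mpow A i = (((**) A) ^^ i) (mat 1)"

definition poly_mat_eval :: "complex poly \<Rightarrow> ('n::finite) cmat \<Rightarrow> ('n::finite) cmat" where
  "poly_mat_eval p A = (\<Sum>i\<le>degree p. mscale (coeff p i) (mpow A i))"

definition min_poly :: "('n::finite) cmat \<Rightarrow> complex poly" where
  "min_poly A = (THE p. lead_coeff p = 1 \<and> poly_mat_eval p A = 0 \<and>
     (\<forall>q. q \<noteq> 0 \<and> poly_mat_eval q A = 0 \<longrightarrow> degree p \<le> degree q))"

definition derogatory :: "('n::finite) cmat \<Rightarrow> bool" where
  "derogatory A \<longleftrightarrow> degree (min_poly A) < CARD('n)"

end

theory Submission
  imports Defs
begin

lemma mscale_comp[simp]: "mscale c A $ i $ j = c * A $ i $ j"
  by (simp add: mscale_def)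

lemma mscale_add_right: "mscale c (A + B) = mscale c A + mscale c B"
  by (simp add: vec_eq_iff ring_distribs)
lemma mscale_add_left: "mscale (a + b) A = mscale a A + mscale b A"
  by (simp add: vec_eq_iff ring_distribs)
lemma mscale_mscale[simp]: "mscale a (mscale b A) = mscale (a * b) A"
  by (simp add: vec_eq_iff)
lemma mscale_one[simp]: "mscale 1 A = A"
  by (simp add: vec_eq_iff)
lemma mscale_zero[simp]: "mscale 0 A = 0" "mscale c 0 = 0"
  by (simp_all add: vec_eq_iff)

interpretation cm: vector_space "mscale :: complex \<Rightarrow> ('n::finite) cmat \<Rightarrow> 'n cmat"
  by unfold_locales (simp_all add: mscale_add_right mscale_add_left)

lemma lin_span_eq: "lin_span W = cm.span W"
  unfolding lin_span_def cm.span_explicit by auto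

lemma mscale_mul_left: "mscale c A ** B = mscale c (A ** B)"
  by (simp add: vec_eq_iff matrix_matrix_mult_def sum_distrib_left mult.assoc)
lemma mscale_mul_right: "A ** mscale c B = mscale c (A ** B)"
  by (simp add: vec_eq_iff matrix_matrix_mult_def sum_distrib_left algebra_simps)
lemma mscale_mulv: "mscale c A *v x = c *s (A *v x)"
  by (simp add: vec_eq_iff matrix_vector_mult_def sum_distrib_left algebra_simps)
lemma matrix_add_rdistrib: "(B + C) ** A = B ** A + C ** A"
  by (simp add: vec_eq_iff matrix_matrix_mult_def sum.distrib ring_distribs)

lemma mul_sum_right: "A ** (\<Sum>i\<in>F. f i) = (\<Sum>i\<in>F. A ** f i)"
  by (induction F rule: infinite_finite_induct) (auto simp: matrix_add_ldistrib)
lemma mul_sum_left: "(\<Sum>i\<in>F. f i) ** A = (\<Sum>i\<in>F. f i ** A)"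
  by (induction F rule: infinite_finite_induct) (auto simp: matrix_add_rdistrib)
lemma sum_mulv: "(\<Sum>i\<in>F. f i) *v x = (\<Sum>i\<in>F. f i *v x)"
  by (induction F rule: infinite_finite_induct) (auto simp: matrix_vector_mult_add_rdistrib)
lemma mscale_sum: "mscale c (\<Sum>i\<in>F. f i) = (\<Sum>i\<in>F. mscale c (f i))"
  by (induction F rule: infinite_finite_induct) (auto simp: mscale_add_right)

lemma mpow_0[simp]: "mpow A 0 = mat 1" and mpow_Suc: "mpow A (Suc i) = A ** mpow A i"
  by (simp_all add: mpow_def)

lemma pme_N: assumes "degree p \<le> N"
  shows "poly_mat_eval p A = (\<Sum>i\<le>N. mscale (coeff p i) (mpow A i))"
proof -
  have "(\<Sum>i\<le>N. mscale (coeff p i) (mpow A i)) = (\<Sum>i\<le>degree p. mscale (coeff p i) (mpow A i))"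
    by (rule sum.mono_neutral_right) (use assms in \<open>auto simp: coeff_eq_0\<close>)
  then show ?thesis by (simp add: poly_mat_eval_def)
qed

lemma pme_add: "poly_mat_eval (p + q) A = poly_mat_eval p A + poly_mat_eval q A"
proof -
  let ?N = "max (degree p) (degree q)"
  have "degree (p+q) \<le> ?N" by (simp add: degree_add_le)
  then show ?thesis
    by (simp add: pme_N[of _ ?N] mscale_add_left sum.distrib)
qed

lemma pme_smult: "poly_mat_eval (smult c p) A = mscale c (poly_mat_eval p A)"
  by (simp add: pme_N[of _ "degree p"] mscale_sum)

lemma pme_minus: "poly_mat_eval (- p) A = - poly_mat_eval p A"
  using pme_smult[of "-1" p A] by (simp add: vec_eq_iff)

lemma pme_diff: "poly_mat_eval (p - q) A = poly_mat_eval p A - poly_mat_eval q A"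
  using pme_add[of p "-q" A] pme_minus[of q A] by simp

lemma pme_0[simp]: "poly_mat_eval 0 A = 0"
  by (simp add: poly_mat_eval_def)

lemma pme_sum: "poly_mat_eval (\<Sum>i\<in>F. f i) A = (\<Sum>i\<in>F. poly_mat_eval (f i) A)"
  by (induction F rule: infinite_finite_induct) (auto simp: pme_add)

lemma pme_monom: "poly_mat_eval (monom c k) A = mscale c (mpow A k)"
proof -
  have "poly_mat_eval (monom c k) A = (\<Sum>i\<le>k. mscale (coeff (monom c k) i) (mpow A i))"
    by (rule pme_N) (simp add: degree_monom_le)
  also have "\<dots> = (\<Sum>i\<le>k. if i = k then mscale c (mpow A k) else 0)"
    by (rule sum.cong) (auto simp: coeff_monom)
  finally show ?thesis by simp
qed

lemma pme_const: "poly_mat_eval [:c:] A = mscale c (mat 1)"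
  using pme_monom[of c 0 A] by (simp add: monom_0)

lemma pme_pCons: "poly_mat_eval (pCons a p) A = mscale a (mat 1) + A ** poly_mat_eval p A"
proof -
  have "poly_mat_eval (pCons a p) A = (\<Sum>i\<le>Suc (degree p). mscale (coeff (pCons a p) i) (mpow A i))"
    by (rule pme_N) (simp add: degree_pCons_le)
  also have "\<dots> = mscale a (mat 1) + (\<Sum>i\<le>degree p. mscale (coeff p i) (mpow A (Suc i)))"
    by (subst sum.atMost_Suc_shift) simp
  also have "\<dots> = mscale a (mat 1) + A ** poly_mat_eval p A"
    by (simp add: poly_mat_eval_def mul_sum_right mscale_mul_right mpow_Suc)
  finally show ?thesis .
qed

lemma pme_mult: "poly_mat_eval (p * q) A = poly_mat_eval p A ** poly_mat_eval q A"
proof (induction p)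
  case 0
  then show ?case by simp
next
  case (pCons a p)
  have "poly_mat_eval (pCons a p * q) A = poly_mat_eval (smult a q + pCons 0 (p * q)) A"
    by simp
  also have "\<dots> = mscale a (poly_mat_eval q A) + A ** (poly_mat_eval p A ** poly_mat_eval q A)"
    by (simp add: pme_add pme_smult pme_pCons pCons.IH)
  also have "\<dots> = poly_mat_eval (pCons a p) A ** poly_mat_eval q A"
    by (simp add: pme_pCons matrix_add_rdistrib mscale_mul_left matrix_mul_assoc)
  finally show ?case .
qed

lemma pme_one[simp]: "poly_mat_eval 1 A = mat 1"
  using pme_const[of 1 A] by (simp add: one_pCons)

lemma pme_comm: "poly_mat_eval p A ** poly_mat_eval q A = poly_mat_eval q A ** poly_mat_eval p A"
  by (metis pme_mult mult.commute)


lemma mulv_scale: "M *v (c *s x) = c *s (M *v (x :: 'a::comm_ring_1^'n))"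
  by (simp add: vec_eq_iff matrix_vector_mult_def sum_distrib_left algebra_simps)
lemma mulv_add: "M *v (x + y) = M *v x + M *v (y :: 'a::comm_ring_1^'n)"
  by (simp add: vec_eq_iff matrix_vector_mult_def sum.distrib algebra_simps)
lemma mulv_diff_left: "(M - N) *v x = M *v x - N *v (x :: 'a::comm_ring_1^'n)"
  by (simp add: vec_eq_iff matrix_vector_mult_def sum_subtractf algebra_simps)

lemma mulv_span:
  fixes M :: "complex^'n^'n"
  assumes T: "vec.subspace T" and G: "\<forall>g\<in>G. M *v g \<in> T" and x: "x \<in> vec.span G"
  shows "M *v x \<in> T"
  using x
proof (induction rule: vec.span_induct_alt)
  case base
  then show ?case using T by (simp add: vec.subspace_0)
next
  case (step c x y)
  then show ?case using T G
    by (simp add: mulv_add mulv_scale vec.subspace_add vec.subspace_scale)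
qed

lemma pme_inv:
  fixes A :: "complex^'n^'n"
  assumes W: "vec.subspace W" and inv: "\<forall>x\<in>W. A *v x \<in> W" and w: "w \<in> W"
  shows "poly_mat_eval p A *v w \<in> W"
proof (induction p)
  case 0
  then show ?case using W by (simp add: vec.subspace_0)
next
  case (pCons a p)
  have "poly_mat_eval (pCons a p) A *v w = a *s w + A *v (poly_mat_eval p A *v w)"
    by (simp add: pme_pCons matrix_vector_mult_add_rdistrib mscale_mulv matrix_vector_mul_assoc)
  then show ?case using pCons.IH W inv w
    by (simp add: vec.subspace_add vec.subspace_scale)
qed

lemma span_image_lt:
  fixes f :: "nat \<Rightarrow> 'a::field^'n"
  shows "b \<in> vec.span (f ` {..<k}) \<Longrightarrow> \<exists>c. b = (\<Sum>i<k. c i *s f i)"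
proof (induction k arbitrary: b)
  case 0
  then show ?case by simp
next
  case (Suc k)
  have "f ` {..<Suc k} = insert (f k) (f ` {..<k})" by (simp add: lessThan_Suc)
  with Suc.prems obtain t where "b - t *s f k \<in> vec.span (f ` {..<k})"
    by (auto simp: vec.span_insert)
  from Suc.IH[OF this] obtain c where c: "b - t *s f k = (\<Sum>i<k. c i *s f i)" by blast
  have "(\<Sum>i<Suc k. (c(k := t)) i *s f i) = (\<Sum>i<k. c i *s f i) + t *s f k"
  proof -
    have "(\<Sum>i<k. (c(k := t)) i *s f i) = (\<Sum>i<k. c i *s f i)"
      by (rule sum.cong) auto
    then show ?thesis by simp
  qed
  also have "\<dots> = b" using c by (simp add: algebra_simps)
  finally show ?case by metis
qed

lemma annih_aux:
  fixes A :: "complex^'n^'n"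
  shows "\<forall>W. vec.subspace W \<and> (\<forall>x\<in>W. A *v x \<in> W) \<and> CARD('n) - vec.dim W = m \<longrightarrow>
    (\<exists>q. lead_coeff q = 1 \<and> degree q + vec.dim W \<le> CARD('n) \<and> (\<forall>x. poly_mat_eval q A *v x \<in> W))"
proof (induction m rule: less_induct)
  case (less m)
  show ?case
  proof (intro allI impI, elim conjE)
    fix W :: "(complex^'n) set"
    assume W: "vec.subspace W" and inv: "\<forall>x\<in>W. A *v x \<in> W" and mW: "CARD('n) - vec.dim W = m"
    have dimle: "vec.dim X \<le> CARD('n)" for X :: "(complex^'n) set"
      by (metis vec.dim_subset subset_UNIV vec_dim_card)
    show "\<exists>q. lead_coeff q = 1 \<and> degree q + vec.dim W \<le> CARD('n) \<and> (\<forall>x. poly_mat_eval q A *v x \<in> W)"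
    proof (cases "W = UNIV")
      case True
      then show ?thesis using vec_dim_card[where 'a=complex and 'n='n] by (intro exI[of _ 1]) simp
    next
      case False
      then obtain v where v: "v \<notin> W" by blast
      define g where "g i = mpow A i *v v" for i
      define U where "U j = vec.span (W \<union> g ` {..<j})" for j
      have U0: "U 0 = W" using W by (simp add: U_def)
      have dimU: "(\<forall>i<j. g i \<notin> U i) \<Longrightarrow> vec.dim (U j) = vec.dim W + j" for j
      proof (induction j)
        case 0
        then show ?case using U0 by simp
      next
        case (Suc j)
        have "U (Suc j) = vec.span (insert (g j) (W \<union> g ` {..<j}))"
          by (simp add: U_def lessThan_Suc)
        then have "vec.dim (U (Suc j)) = vec.dim (insert (g j) (W \<union> g ` {..<j}))" by simp
        also have "\<dots> = vec.dim (U j) + 1"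
          using Suc.prems by (simp add: vec.dim_insert U_def)
        finally show ?case using Suc by simp
      qed
      have ex: "\<exists>j. g j \<in> U j"
      proof (rule ccontr)
        assume "\<not> ?thesis"
        then have "vec.dim (U (Suc (CARD('n)))) = vec.dim W + Suc (CARD('n))" using dimU by blast
        with dimle[of "U (Suc (CARD('n)))"] show False by simp
      qed
      define k where "k = (LEAST j. g j \<in> U j)"
      have gk: "g k \<in> U k" unfolding k_def using ex by (rule LeastI_ex)
      have lt: "\<forall>i<k. g i \<notin> U i" unfolding k_def using not_less_Least by blast
      have dimUk: "vec.dim (U k) = vec.dim W + k" using dimU lt by blast
      have k0: "k \<noteq> 0"
      proof
        assume "k = 0"
        with gk U0 have "g 0 \<in> W" by simp
        with v show False by (simp add: g_def)
      qed
      have Usub: "vec.subspace (U k)" by (simp add: U_def)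
      have WU: "W \<subseteq> U k" by (auto simp: U_def intro: vec.span_base)
      have gU: "i < k \<Longrightarrow> g i \<in> U k" for i by (auto simp: U_def intro: vec.span_base)
      have Uinv: "\<forall>x\<in>U k. A *v x \<in> U k"
      proof
        fix x assume x: "x \<in> U k"
        show "A *v x \<in> U k"
        proof (rule mulv_span[OF Usub _ x[unfolded U_def]], intro ballI)
          fix y assume "y \<in> W \<union> g ` {..<k}"
          then show "A *v y \<in> U k"
          proof
            assume "y \<in> W" then show ?thesis using inv WU by blast
          next
            assume "y \<in> g ` {..<k}"
            then obtain i where i: "i < k" "y = g i" by blast
            have "A *v y = g (Suc i)" using i by (simp add: g_def mpow_Suc matrix_vector_mul_assoc)
            then show ?thesis using gU[of "Suc i"] gk i by (cases "Suc i = k") auto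
          qed
        qed
      qed
      from gk obtain w b where wb: "g k = w + b" "w \<in> vec.span W" "b \<in> vec.span (g ` {..<k})"
        unfolding U_def vec.span_Un by blast
      from span_image_lt[OF wb(3)] obtain c where c: "b = (\<Sum>i<k. c i *s g i)" by blast
      have wW: "w \<in> W" using wb(2) W by (metis vec.span_eq_iff)
      define q1 where "q1 = monom 1 k - (\<Sum>i<k. monom (c i) i)"
      have cq1: "coeff q1 j = (if j = k then 1 else if j < k then - c j else 0)" for j
        by (auto simp: q1_def coeff_sum coeff_monom)
      have dq1: "degree q1 = k"
      proof (rule antisym)
        show "degree q1 \<le> k" by (rule degree_le) (auto simp: cq1)
        show "k \<le> degree q1" by (rule le_degree) (simp add: cq1)
      qed
      have lq1: "lead_coeff q1 = 1" by (simp add: dq1 cq1)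
      have q1v: "poly_mat_eval q1 A *v v = w"
      proof -
        have "poly_mat_eval q1 A *v v = g k - (\<Sum>i<k. c i *s g i)"
          by (simp add: q1_def pme_diff pme_sum pme_monom mulv_diff_left sum_mulv mscale_mulv g_def)
        then show ?thesis using wb(1) c by simp
      qed
      have mp: "mpow A i = poly_mat_eval (monom 1 i) A" for i by (simp add: pme_monom)
      have q1U: "poly_mat_eval q1 A *v x \<in> W" if x: "x \<in> U k" for x
      proof (rule mulv_span[OF W _ x[unfolded U_def]], intro ballI)
        fix y assume "y \<in> W \<union> g ` {..<k}"
        then show "poly_mat_eval q1 A *v y \<in> W"
        proof
          assume "y \<in> W" then show ?thesis using pme_inv[OF W inv] by blast
        next
          assume "y \<in> g ` {..<k}"
          then obtain i where i: "y = g i" by blast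
          have "poly_mat_eval q1 A *v y = mpow A i *v (poly_mat_eval q1 A *v v)"
            unfolding i g_def matrix_vector_mul_assoc mp by (simp add: pme_comm)
          also have "\<dots> = poly_mat_eval (monom 1 i) A *v w" using q1v mp by simp
          finally show ?thesis using pme_inv[OF W inv wW] by simp
        qed
      qed
      have "CARD('n) - vec.dim (U k) < m" using mW dimUk k0 dimle[of "U k"] by linarith
      from less.IH[OF this] Usub Uinv obtain q2 where
        q2: "lead_coeff q2 = 1" "degree q2 + vec.dim (U k) \<le> CARD('n)" "\<forall>x. poly_mat_eval q2 A *v x \<in> U k"
        by blast
      have nz: "q1 \<noteq> 0" "q2 \<noteq> 0" using lq1 q2(1) by auto
      show ?thesis
      proof (intro exI[of _ "q1 * q2"] conjI allI)
        show "lead_coeff (q1 * q2) = 1" using lq1 q2(1) by (simp add: lead_coeff_mult)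
        show "degree (q1 * q2) + vec.dim W \<le> CARD('n)"
          using degree_mult_eq[OF nz] dq1 q2(2) dimUk by simp
        fix x
        show "poly_mat_eval (q1 * q2) A *v x \<in> W"
          using q1U[OF q2(3)[rule_format, of x]]
          by (simp add: pme_mult matrix_vector_mul_assoc[symmetric])
      qed
    qed
  qed
qed

lemma annih:
  fixes A :: "complex^'n^'n"
  shows "\<exists>q. lead_coeff q = 1 \<and> degree q \<le> CARD('n) \<and> poly_mat_eval q A = 0"
proof -
  have "vec.subspace (vec.span {} :: (complex^'n) set)" by simp
  moreover have "\<forall>x\<in>vec.span {}. A *v x \<in> (vec.span {} :: (complex^'n) set)" by simp
  ultimately obtain q where q: "lead_coeff q = 1" "degree q + vec.dim (vec.span ({} :: (complex^'n) set)) \<le> CARD('n)"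
     "\<forall>x. poly_mat_eval q A *v x \<in> vec.span {}"
    using annih_aux[of A "CARD('n) - vec.dim (vec.span ({} :: (complex^'n) set))"] by blast
  have "poly_mat_eval q A = 0" using q(3) by (simp add: matrix_eq)
  with q show ?thesis by auto
qed


definition isminp :: "complex poly \<Rightarrow> ('n::finite) cmat \<Rightarrow> bool" where
  "isminp p A \<longleftrightarrow> lead_coeff p = 1 \<and> poly_mat_eval p A = 0 \<and>
     (\<forall>q. q \<noteq> 0 \<and> poly_mat_eval q A = 0 \<longrightarrow> degree p \<le> degree q)"

lemma minp_ex: "\<exists>p. isminp p (A :: 'n::finite cmat)"
proof -
  obtain q where q: "lead_coeff q = 1" "degree q \<le> CARD('n)" "poly_mat_eval q A = 0"
    using annih[of A] by blast
  have ex: "\<exists>d q. q \<noteq> 0 \<and> poly_mat_eval q A = 0 \<and> degree q = d"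
    using q by (intro exI[of _ "degree q"] exI[of _ q]) auto
  define d where "d = (LEAST d. \<exists>q. q \<noteq> 0 \<and> poly_mat_eval q A = 0 \<and> degree q = d)"
  obtain q0 where q0: "q0 \<noteq> 0" "poly_mat_eval q0 A = 0" "degree q0 = d"
    unfolding d_def using LeastI_ex[OF ex] by blast
  have mn: "q \<noteq> 0 \<Longrightarrow> poly_mat_eval q A = 0 \<Longrightarrow> d \<le> degree q" for q
    unfolding d_def by (rule Least_le) blast
  define p where "p = smult (inverse (lead_coeff q0)) q0"
  have "isminp p A"
    unfolding isminp_def p_def using q0 mn by (auto simp: pme_smult)
  then show ?thesis by blast
qed

lemma minp_unique: assumes "isminp p A" "isminp p' A" shows "p = p'"
proof (rule ccontr)
  assume ne: "p \<noteq> p'"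
  have nz: "p \<noteq> 0" "p' \<noteq> 0" using assms by (auto simp: isminp_def)
  have eq: "degree p = degree p'" using assms nz unfolding isminp_def by (meson antisym)
  have r: "p - p' \<noteq> 0" "poly_mat_eval (p - p') A = 0"
    using ne assms by (auto simp: pme_diff isminp_def)
  then have "degree p \<le> degree (p - p')" using assms(1) unfolding isminp_def by blast
  moreover have "degree (p - p') \<le> degree p" using eq by (simp add: degree_diff_le)
  ultimately have "degree (p - p') = degree p" by simp
  moreover have "coeff (p - p') (degree p) = 0" using assms eq by (simp add: isminp_def)
  ultimately show False using r(1) by (metis leading_coeff_0_iff)
qed

lemma min_poly_isminp: "isminp (min_poly A) A"
proof -
  obtain p where p: "isminp p A" using minp_ex by blast
  have "min_poly A = p"
    unfolding min_poly_def
    by (rule the_equality) (use p minp_unique in \<open>auto simp: isminp_def\<close>)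
  with p show ?thesis by simp
qed

lemma min_poly_deg: "degree (min_poly (A :: 'n::finite cmat)) \<le> CARD('n)"
proof -
  obtain q where q: "lead_coeff q = 1" "degree q \<le> CARD('n)" "poly_mat_eval q A = 0"
    using annih[of A] by blast
  then have "q \<noteq> 0" by auto
  with q min_poly_isminp[of A] show ?thesis unfolding isminp_def by fastforce
qed

lemma invertible_cancel:
  fixes A :: "'n::finite cmat"
  assumes "invertible A" "A ** X = 0" shows "X = 0"
proof -
  obtain B where B: "B ** A = mat 1" using assms(1) by (auto simp: invertible_def)
  have "X = (B ** A) ** X" using B by simp
  also have "\<dots> = 0" by (simp add: matrix_mul_assoc[symmetric] assms(2))
  finally show ?thesis .
qed

lemma id_combo:
  fixes A :: "'n::finite cmat"
  assumes inv: "invertible A"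
  shows "\<exists>c. mat 1 = (\<Sum>i\<in>{1..degree (min_poly A)}. mscale (c i) (mpow A i))"
proof -
  let ?p = "min_poly A"
  have mp: "isminp ?p A" by (rule min_poly_isminp)
  have c0: "coeff ?p 0 \<noteq> 0"
  proof
    assume z: "coeff ?p 0 = 0"
    obtain a r where pr: "?p = pCons a r" by (cases ?p) auto
    have a0: "a = 0" using z pr by simp
    have rnz: "r \<noteq> 0" using mp pr a0 by (auto simp: isminp_def)
    have "A ** poly_mat_eval r A = 0" using mp pr a0 by (simp add: isminp_def pme_pCons)
    then have "poly_mat_eval r A = 0" using invertible_cancel[OF inv] by blast
    then have "degree ?p \<le> degree r" using mp rnz by (auto simp: isminp_def)
    moreover have "degree ?p = Suc (degree r)" using pr rnz by simp
    ultimately show False by simp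
  qed
  let ?d = "degree ?p"
  have "0 = poly_mat_eval ?p A" using mp by (simp add: isminp_def)
  also have "\<dots> = (\<Sum>i\<in>insert 0 {1..?d}. mscale (coeff ?p i) (mpow A i))"
    unfolding poly_mat_eval_def by (rule sum.cong) auto
  also have "\<dots> = mscale (coeff ?p 0) (mat 1) + (\<Sum>i\<in>{1..?d}. mscale (coeff ?p i) (mpow A i))"
    by (subst sum.insert) auto
  finally have e: "mscale (coeff ?p 0) (mat 1) = - (\<Sum>i\<in>{1..?d}. mscale (coeff ?p i) (mpow A i))"
    by (simp add: eq_neg_iff_add_eq_0)
  have "mat 1 = mscale (- inverse (coeff ?p 0)) (- mscale (coeff ?p 0) (mat 1))"
    using c0 by (simp add: vec_eq_iff)
  also have "\<dots> = (\<Sum>i\<in>{1..?d}. mscale (- inverse (coeff ?p 0) * coeff ?p i) (mpow A i))"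
    unfolding e by (simp add: mscale_sum)
  finally show ?thesis by (intro exI[of _ "\<lambda>i. - inverse (coeff ?p 0) * coeff ?p i"])
qed


definition SM :: "('n::finite) cmat set \<Rightarrow> 'n cmat set \<Rightarrow> 'n cmat set" where
  "SM S W = {X ** Y | X Y. X \<in> S \<and> Y \<in> W}"

lemma words1: "words S (Suc 0) = S"
  by auto

lemma words_union0: "(\<Union>m\<in>{0..Suc k}. words S m) = {mat 1} \<union> SM S (\<Union>m\<in>{0..k}. words S m)"
proof (rule set_eqI)
  fix x
  show "x \<in> (\<Union>m\<in>{0..Suc k}. words S m) \<longleftrightarrow> x \<in> {mat 1} \<union> SM S (\<Union>m\<in>{0..k}. words S m)"
  proof
    assume "x \<in> (\<Union>m\<in>{0..Suc k}. words S m)"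
    then obtain m where m: "m \<le> Suc k" "x \<in> words S m" by auto
    then show "x \<in> {mat 1} \<union> SM S (\<Union>m\<in>{0..k}. words S m)"
      by (cases m) (auto simp: SM_def)
  next
    assume "x \<in> {mat 1} \<union> SM S (\<Union>m\<in>{0..k}. words S m)"
    then show "x \<in> (\<Union>m\<in>{0..Suc k}. words S m)"
    proof
      assume "x \<in> {mat 1}" then show ?thesis by (intro UN_I[of 0]) auto
    next
      assume "x \<in> SM S (\<Union>m\<in>{0..k}. words S m)"
      then obtain X Y m where "x = X ** Y" "X \<in> S" "m \<le> k" "Y \<in> words S m" by (auto simp: SM_def)
      then show ?thesis by (intro UN_I[of "Suc m"]) auto
    qed
  qed
qed

lemma words_union1: "(\<Union>m\<in>{1..Suc k}. words S m) = S \<union> SM S (\<Union>m\<in>{1..k}. words S m)"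
proof (rule set_eqI)
  fix x
  show "x \<in> (\<Union>m\<in>{1..Suc k}. words S m) \<longleftrightarrow> x \<in> S \<union> SM S (\<Union>m\<in>{1..k}. words S m)"
  proof
    assume "x \<in> (\<Union>m\<in>{1..Suc k}. words S m)"
    then obtain m where m: "1 \<le> m" "m \<le> Suc k" "x \<in> words S m" by auto
    then obtain m' where m': "m = Suc m'" by (cases m) auto
    show "x \<in> S \<union> SM S (\<Union>m\<in>{1..k}. words S m)"
    proof (cases m')
      case 0 then show ?thesis using m m' by auto
    next
      case (Suc j)
      obtain X Y where xy: "x = X ** Y" "X \<in> S" "Y \<in> words S (Suc j)" using m(3) m' Suc by auto
      have "Y \<in> (\<Union>m\<in>{1..k}. words S m)" using xy(3) m m' Suc by (intro UN_I[of "Suc j"]) auto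
      then show ?thesis using xy unfolding SM_def by blast
    qed
  next
    assume "x \<in> S \<union> SM S (\<Union>m\<in>{1..k}. words S m)"
    then show "x \<in> (\<Union>m\<in>{1..Suc k}. words S m)"
    proof
      assume "x \<in> S" then show ?thesis by (intro UN_I[of 1]) (auto simp: words1)
    next
      assume "x \<in> SM S (\<Union>m\<in>{1..k}. words S m)"
      then obtain X Y m where "x = X ** Y" "X \<in> S" "1 \<le> m" "m \<le> k" "Y \<in> words S m" by (auto simp: SM_def)
      then show ?thesis by (intro UN_I[of "Suc m"]) auto
    qed
  qed
qed

lemma mul_span1:
  fixes T :: "'n::finite cmat set"
  assumes T: "cm.subspace T" and H: "\<forall>h\<in>H. g ** h \<in> T" and y: "y \<in> cm.span H"
  shows "g ** y \<in> T"
  using y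
proof (induction rule: cm.span_induct_alt)
  case base then show ?case using T by (simp add: cm.subspace_0)
next
  case (step c x y) then show ?case using T H
    by (simp add: matrix_add_ldistrib mscale_mul_right cm.subspace_add cm.subspace_scale)
qed

lemma mul_span:
  fixes T :: "'n::finite cmat set"
  assumes T: "cm.subspace T" and GH: "\<forall>g\<in>G. \<forall>h\<in>H. g ** h \<in> T"
    and x: "x \<in> cm.span G" and y: "y \<in> cm.span H"
  shows "x ** y \<in> T"
proof -
  have "\<forall>y\<in>cm.span H. x ** y \<in> T" using x
  proof (induction rule: cm.span_induct_alt)
    case base then show ?case using T by (simp add: cm.subspace_0)
  next
    case (step c x z)
    show ?case
    proof
      fix y assume y: "y \<in> cm.span H"
      have "x ** y \<in> T" using mul_span1[OF T _ y] GH step(1) by blast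
      then show "(mscale c x + z) ** y \<in> T" using step(2) y T
        by (simp add: matrix_add_rdistrib mscale_mul_left cm.subspace_add cm.subspace_scale)
    qed
  qed
  with y show ?thesis by blast
qed

lemma spanSM: "cm.span (B \<union> SM S (cm.span W)) = cm.span (B \<union> SM S W)"
proof (rule antisym)
  show "cm.span (B \<union> SM S (cm.span W)) \<subseteq> cm.span (B \<union> SM S W)"
  proof (rule cm.span_minimal)
    show "B \<union> SM S (cm.span W) \<subseteq> cm.span (B \<union> SM S W)"
    proof
      fix x assume "x \<in> B \<union> SM S (cm.span W)"
      then show "x \<in> cm.span (B \<union> SM S W)"
      proof
        assume "x \<in> B" then show ?thesis by (auto intro: cm.span_base)
      next
        assume "x \<in> SM S (cm.span W)"
        then obtain X Y where xy: "x = X ** Y" "X \<in> S" "Y \<in> cm.span W" by (auto simp: SM_def)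
        show ?thesis unfolding xy(1)
          by (rule mul_span1[OF _ _ xy(3)]) (use xy(2) in \<open>auto simp: SM_def intro: cm.span_base\<close>)
      qed
    qed
  qed simp
  show "cm.span (B \<union> SM S W) \<subseteq> cm.span (B \<union> SM S (cm.span W))"
    by (rule cm.span_mono) (auto simp: SM_def intro: cm.span_base)
qed

lemma Lrec: "L S (Suc k) = cm.span ({mat 1} \<union> SM S (L S k))"
  unfolding L_def lin_span_eq words_union0 spanSM ..

lemma L0rec: "L0 S (Suc k) = cm.span (S \<union> SM S (L0 S k))"
  unfolding L0_def lin_span_eq words_union1 spanSM ..

lemma stab:
  assumes rec: "\<And>k. F (Suc k) = cm.span (B \<union> SM S (F k))" and eq: "F k = F (Suc k)" and km: "k \<le> m"
  shows "F m = F k"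
  using km
proof (induction m rule: dec_induct)
  case base then show ?case ..
next
  case (step m)
  have "F (Suc m) = cm.span (B \<union> SM S (F k))" using rec[of m] step(3) by simp
  also have "\<dots> = F k" using rec[of k] eq by simp
  finally show ?case .
qed

lemma L_mono: "k \<le> k' \<Longrightarrow> L S k \<subseteq> L S k'"
  unfolding L_def lin_span_eq by (rule cm.span_mono, rule UN_mono) auto

lemma L0_mono: "k \<le> k' \<Longrightarrow> L0 S k \<subseteq> L0 S k'"
  unfolding L0_def lin_span_eq by (rule cm.span_mono, rule UN_mono) auto

lemma L0_sub_L: "L0 S k \<subseteq> L S k"
  unfolding L_def L0_def lin_span_eq by (rule cm.span_mono) auto

lemma L_sub_L0: assumes "mat 1 \<in> L0 S k" shows "L S k \<subseteq> L0 S k"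
  unfolding L_def lin_span_eq
proof (rule cm.span_minimal)
  show "cm.subspace (L0 S k)" by (simp add: L0_def lin_span_eq)
  show "(\<Union>m\<in>{0..k}. words S m) \<subseteq> L0 S k"
  proof
    fix x assume "x \<in> (\<Union>m\<in>{0..k}. words S m)"
    then obtain m where m: "m \<le> k" "x \<in> words S m" by auto
    show "x \<in> L0 S k"
    proof (cases m)
      case 0 then show ?thesis using m assms by simp
    next
      case (Suc j) then show ?thesis using m unfolding L0_def lin_span_eq
        by (intro cm.span_base UN_I[of "Suc j"]) auto
    qed
  qed
qed

lemma words_mul: "X \<in> words S a \<Longrightarrow> Y \<in> words S b \<Longrightarrow> X ** Y \<in> words S (a + b)"
proof (induction a arbitrary: X)
  case 0 then show ?case by simp
next
  case (Suc a)
  then obtain P Q where "X = P ** Q" "P \<in> S" "Q \<in> words S a" by auto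
  with Suc show ?case by (auto simp: matrix_mul_assoc[symmetric])
qed

lemma L0_mul: "X \<in> L0 S a \<Longrightarrow> Y \<in> L0 S b \<Longrightarrow> X ** Y \<in> L0 S (a + b)"
  unfolding L0_def lin_span_eq
proof (rule mul_span[of _ "\<Union>m\<in>{1..a}. words S m" "\<Union>m\<in>{1..b}. words S m"])
  show "\<forall>g\<in>\<Union>m\<in>{1..a}. words S m. \<forall>h\<in>\<Union>m\<in>{1..b}. words S m. g ** h \<in> cm.span (\<Union>m\<in>{1..a+b}. words S m)"
  proof (intro ballI)
    fix g h assume g: "g \<in> (\<Union>m\<in>{1..a}. words S m)" and h: "h \<in> (\<Union>m\<in>{1..b}. words S m)"
    then obtain i j where ij: "i \<in> {1..a}" "j \<in> {1..b}" "g \<in> words S i" "h \<in> words S j" by blast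
    have "g ** h \<in> words S (i + j)" using ij words_mul by blast
    then show "g ** h \<in> cm.span (\<Union>m\<in>{1..a+b}. words S m)"
      using ij by (intro cm.span_base UN_I[of "i + j"]) auto
  qed
qed auto

lemma mpow_L0: assumes "A \<in> L0 S t" "1 \<le> i" shows "mpow A i \<in> L0 S (t * i)"
  using assms(2)
proof (induction i rule: dec_induct)
  case base then show ?case using assms(1) by (simp add: mpow_Suc)
next
  case (step i)
  have "A ** mpow A i \<in> L0 S (t + t * i)" by (rule L0_mul[OF assms(1) step(3)])
  then show ?case by (simp add: mpow_Suc)
qed

lemma id_L0:
  assumes "A \<in> L0 S t" "invertible A" "t * degree (min_poly A) \<le> k"
  shows "mat 1 \<in> L0 S k"
proof -
  obtain c where c: "mat 1 = (\<Sum>i\<in>{1..degree (min_poly A)}. mscale (c i) (mpow A i))"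
    using id_combo[OF assms(2)] by blast
  have sub: "cm.subspace (L0 S k)" by (simp add: L0_def lin_span_eq)
  have "(\<Sum>i\<in>{1..degree (min_poly A)}. mscale (c i) (mpow A i)) \<in> L0 S k"
  proof (rule cm.subspace_sum[OF sub], rule cm.subspace_scale[OF sub])
    fix i assume i: "i \<in> {1..degree (min_poly A)}"
    have "t * i \<le> k" using i assms(3) by (meson atLeastAtMost_iff le_trans mult_le_mono2)
    then show "mpow A i \<in> L0 S k" using mpow_L0[OF assms(1)] i L0_mono by fastforce
  qed
  with c show ?thesis by simp
qed

lemma scaleR_mscale: "scaleR r X = mscale (complex_of_real r) X"
  by (simp add: vec_eq_iff scaleR_conv_of_real[where 'a=complex])

lemma real_sub: "cm.subspace X \<Longrightarrow> subspace X"
  unfolding subspace_def cm.subspace_def by (simp add: scaleR_mscale)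

lemma L_stab_ex: fixes S :: "('n::finite) cmat set" shows "\<exists>k. L S k = L S (Suc k)"
proof (rule ccontr)
  assume "\<not> ?thesis"
  then have ne: "L S k \<noteq> L S (Suc k)" for k by blast
  have rs: "subspace (L S k)" for k by (rule real_sub) (simp add: L_def lin_span_eq)
  have "k \<le> dim (L S k)" for k
  proof (induction k)
    case 0 then show ?case by simp
  next
    case (Suc k)
    have "L S k \<subset> L S (Suc k)" using ne[of k] L_mono[of k "Suc k"] by auto
    then have "dim (L S k) < dim (L S (Suc k))" using rs by (metis dim_psubset span_eq_iff)
    then show ?case using Suc by simp
  qed
  moreover have "dim (L S k) \<le> DIM('n cmat)" for k by (rule dim_subset_UNIV)
  ultimately show False by (metis Suc_n_not_le_n le_trans)
qed

lemma core:
  assumes full: "L_all S = UNIV" and id: "mat 1 \<in> L0 S (len S)"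
  shows "len0 S = len S"
proof -
  define l where "l = len S"
  have Pl: "L S l = L S (Suc l)" unfolding l_def len_def by (rule LeastI_ex[OF L_stab_ex])
  have notP: "k < l \<Longrightarrow> L S k \<noteq> L S (Suc k)" for k unfolding l_def len_def using not_less_Least by blast
  have stabL: "l \<le> m \<Longrightarrow> L S m = L S l" for m by (rule stab[OF Lrec Pl])
  have Lfull': "X \<in> L S l" for X
  proof -
    have "X \<in> L_all S" using full by simp
    then obtain m where m: "X \<in> L S m" by (auto simp: L_all_def)
    show "X \<in> L S l"
    proof (cases "m \<le> l")
      case True then show ?thesis using m L_mono by blast
    next
      case False then show ?thesis using m stabL[of m] by simp
    qed
  qed
  have Lfull: "L S l = UNIV" using Lfull' by auto
  have L0full: "L0 S l = UNIV" using L_sub_L0[OF id[folded l_def]] Lfull by auto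
  have P0l: "L0 S l = L0 S (Suc l)" using L0full L0_mono[of l "Suc l" S] by auto
  have lt0: "k < l \<Longrightarrow> L0 S k \<noteq> L0 S (Suc k)" for k
  proof
    assume k: "k < l" and eq: "L0 S k = L0 S (Suc k)"
    have "L0 S l = L0 S k" by (rule stab[OF L0rec eq]) (use k in simp)
    then have "L S k = UNIV" using L0full L0_sub_L[of S k] by auto
    moreover have "L S (Suc k) = UNIV" using calculation L_mono[of k "Suc k" S] by auto
    ultimately show False using notP[OF k] by simp
  qed
  have "(LEAST k. L0 S k = L0 S (Suc k)) = l"
    by (rule Least_equality[where P="\<lambda>k. L0 S k = L0 S (Suc k)", OF P0l]) (use lt0 in \<open>meson not_le\<close>)
  then show ?thesis by (simp add: len0_def l_def)
qed

theorem mainTheorem2: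
  fixes S :: "('n::finite) cmat set"
  assumes "finite S"
    and "L_all S = UNIV"
  shows "(len S \<ge> CARD('n) \<and> (\<exists>A\<in>L0 S 1. invertible A) \<longrightarrow> len0 S = len S)
       \<and> (len S = 2 * CARD('n) - 2 \<and> (\<exists>A\<in>L0 S 2. invertible A \<and> derogatory A)
            \<longrightarrow> len0 S = len S)"
proof (intro conjI impI; elim conjE bexE)
  fix A assume l: "CARD('n) \<le> len S" and A: "A \<in> L0 S 1" "invertible A"
  have "1 * degree (min_poly A) \<le> len S" using min_poly_deg[of A] l by simp
  from id_L0[OF A this] show "len0 S = len S" by (rule core[OF assms(2)])
next
  fix A assume l: "len S = 2 * CARD('n) - 2" and A: "A \<in> L0 S 2" "invertible A" and d: "derogatory A"
  have "2 * degree (min_poly A) \<le> len S" using d l by (simp add: derogatory_def)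
  from id_L0[OF A(1,2) this] show "len0 S = len S" by (rule core[OF assms(2)])
qed

end
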